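(* Let $\mathbf V$ be a monoid variety and let $\mathcal F$ be a logic corresponding to $\mathbf V$. Let $f$ be a partial function $\Sigma^\ast\to\Sigma^\ast$ definable by a complete $\mathbf V$-bimachine. Then $f$ is definable by an $\mathcal F$-translation.
   Context: Bimachines: a bimachine is a tuple $B=(L,R,\omega,\lambda,\rho)$ where $L$ is a deterministic left automaton over $\Sigma$ with initial state $l_0$, $R$ is a deterministic right automaton (reading right to left) with initial state $r_0$, $\omega:L\times\Sigma\times R\to\Sigma^\ast$ is a partial output function and $\rho:L\to\Sigma^\ast$, $\lambda:R\to\Sigma^\ast$ are partial. For $u=\sigma_1\cdots\sigma_n$ with runs $l_0\xrightarrow{\sigma_1}l_1\cdots\xrightarrow{\sigma_n}l_n$ of $L$ and $r_n\xleftarrow{\sigma_1}r_{n-1}\cdots r_1\xleftarrow{\sigma_n}r_0$ of $R$, $[\![B]\!](u)=\lambda(r_n)\,\omega(l_0,\sigma_1,r_{n-1})\cdots\omega(l_{i-1},\sigma_i,r_{n-i})\cdots\omega(l_{n-1},\sigma_n,r_0)\,\rho(l_n)$ when all these are defined. $B$ is complete if $\omega$ is total. The transition congruence of an automaton $A$ with state set $Q$ is $u\equiv_A v$ iff for all $p,q\in Q$, ($A$ has a run from $p$ to $q$ on $u$) $\Leftrightarrow$ (it has one on $v$); the transition monoid is $\Sigma^\ast/\equiv_A$; $A$ is a $\mathbf V$-automaton if its transition monoid is in $\mathbf V$. $B$ is a $\mathbf V$-bimachine if $L$ and $R$ are $\mathbf V$-automata. A language is a $\mathbf V$-language if it is recognized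 by some $\mathbf V$-automaton. Logics: $\mathcal F$ is a fragment of monadic second-order logic over words (signature $<$ and unary letter predicates); a language is an $\mathcal F$-language if it is the set of words satisfying some closed $\mathcal F$-formula; $\mathcal F$ corresponds to $\mathbf V$ if the $\mathcal F$-languages are exactly the $\mathbf V$-languages. Translations: an $\mathcal F$-translation is a tuple $\mathcal T=(k,S,(\varphi^<_{j,\sigma,v},\varphi^>_{j,\sigma,v})_{1\le j\le k,\sigma\in\Sigma,v\in S},(\varphi^i_v)_{v\in S},(\varphi^t_v)_{v\in S})$ with $k>0$, $S\subset\Sigma^\ast$ finite, and all $\varphi$ closed $\mathcal F$-formulas. $(u,w)\in[\![\mathcal T]\!]$ iff for $u=\sigma_1\cdots\sigma_n$ there is a decomposition $w=w_0w_1\cdots w_nw_{n+1}$ with all $w_i\in S$ such that for each $1\le i\le n$ there is $j\le k$ with $\sigma_1\cdots\sigma_{i-1}\models\varphi^<_{j,\sigma_i,w_i}$ and $\sigma_{i+1}\cdots\sigma_n\models\varphi^>_{j,\sigma_i,w_i}$, and $u\models\varphi^i_{w_0}$, $u\models\varphi^t_{w_{n+1}}$. It is required to be exhaustive: for all $\sigma\in\Sigma$, $u,w\in\Sigma^\ast$ there are $j\le k$, $v\in S$ with $u\models\varphi^<_{j,\sigma,v}$ and $w\models\varphi^>_{j,\sigma,v}$; and functional: for $v_1\ne v_2$ in $S$ and any $j,j',\sigma$, either $\varphi^<_{j,\sigma,v_1}\wedge\varphi^<_{j',\sigma,v_2}$ or $\varphi^>_{j,\sigma,v_1}\wedge\varphi^>_{j',\sigma,v_2}$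 is unsatisfiable, and $\varphi^i_{v_1}\wedge\varphi^i_{v_2}$, $\varphi^t_{v_1}\wedge\varphi^t_{v_2}$ are unsatisfiable. A function is definable by $\mathcal T$ if it equals $[\![\mathcal T]\!]$. *)

theory Defs
  imports "HOL-Algebra.Group"
begin

definition mon_hom :: "'a monoid \<Rightarrow> 'b monoid \<Rightarrow> ('a \<Rightarrow> 'b) set" where
  "mon_hom M N = {h. h \<in> carrier M \<rightarrow> carrier N \<and>
     (\<forall>x\<in>carrier M. \<forall>y\<in>carrier M. h (x \<otimes>\<^bsub>M\<^esub> y) = h x \<otimes>\<^bsub>N\<^esub> h y) \<and>
     h \<one>\<^bsub>M\<^esub> = \<one>\<^bsub>N\<^esub>}"

definition mon_iso :: "'a monoid \<Rightarrow> 'b monoid \<Rightarrow> bool" where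
  "mon_iso M N \<longleftrightarrow> (\<exists>h\<in>mon_hom M N. bij_betw h (carrier M) (carrier N))"

definition fin_monoid :: "'a monoid \<Rightarrow> bool" where
  "fin_monoid M \<longleftrightarrow> monoid M \<and> finite (carrier M)"

definition prodM :: "'a monoid \<Rightarrow> 'b monoid \<Rightarrow> ('a \<times> 'b) monoid" where
  "prodM M N = \<lparr>carrier = carrier M \<times> carrier N,
     mult = (\<lambda>(x1,y1) (x2,y2). (x1 \<otimes>\<^bsub>M\<^esub> x2, y1 \<otimes>\<^bsub>N\<^esub> y2)),
     one = (\<one>\<^bsub>M\<^esub>, \<one>\<^bsub>N\<^esub>)\<rparr>"

text \<open>A monoid variety (pseudovariety): a class of finite monoids closed under
  submonoids, quotients (surjective images, hence isomorphic copies) and finite direct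
  products (including the empty product, the trivial monoid).  Since every finite
  monoid is isomorphic to one carried by a subset of nat, the class is represented by
  its members carried by nat.\<close>

definition monoid_variety :: "nat monoid set \<Rightarrow> bool" where
  "monoid_variety V \<longleftrightarrow>
     (\<forall>M\<in>V. fin_monoid M) \<and>
     (\<exists>M\<in>V. card (carrier M) = 1) \<and>
     (\<forall>M\<in>V. \<forall>S. S \<subseteq> carrier M \<and> \<one>\<^bsub>M\<^esub> \<in> S \<and> (\<forall>x\<in>S. \<forall>y\<in>S. x \<otimes>\<^bsub>M\<^esub> y \<in> S)
                \<longrightarrow> M\<lparr>carrier := S\<rparr> \<in> V) \<and>
     (\<forall>M\<in>V. \<forall>N :: nat monoid. monoid N \<and> (\<exists>h\<in>mon_hom M N. h ` carrier M = carrier N)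
                \<longrightarrow> N \<in> V) \<and>
     (\<forall>M\<in>V. \<forall>N\<in>V. \<exists>P\<in>V. mon_iso P (prodM M N))"

definition in_var :: "nat monoid set \<Rightarrow> 'b monoid \<Rightarrow> bool" where
  "in_var V M \<longleftrightarrow> (\<exists>N\<in>V. mon_iso M N)"

record ('q, 'a) dfa =
  states :: "'q set"
  init :: 'q
  trans :: "'q \<Rightarrow> 'a \<Rightarrow> 'q option"
  final :: "'q set"

definition wf_dfa :: "('q, 'a) dfa \<Rightarrow> bool" where
  "wf_dfa A \<longleftrightarrow> finite (states A) \<and> init A \<in> states A \<and> final A \<subseteq> states A \<and>
     (\<forall>q\<in>states A. \<forall>a p. trans A q a = Some p \<longrightarrow> p \<in> states A)"

fun steps :: "('q, 'a) dfa \<Rightarrow> 'q \<Rightarrow> 'a list \<Rightarrow> 'q option" where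
  "steps A q [] = Some q"
| "steps A q (a # w) = (case trans A q a of None \<Rightarrow> None | Some p \<Rightarrow> steps A p w)"

definition run_rel :: "('q, 'a) dfa \<Rightarrow> 'a list \<Rightarrow> ('q \<times> 'q) set" where
  "run_rel A w = {(p, q). p \<in> states A \<and> q \<in> states A \<and> steps A p w = Some q}"

definition dfa_lang :: "('q, 'a) dfa \<Rightarrow> 'a list set" where
  "dfa_lang A = {w. \<exists>q. steps A (init A) w = Some q \<and> q \<in> final A}"

definition quot_monoid :: "('a list \<Rightarrow> 'a list \<Rightarrow> bool) \<Rightarrow> 'a list set monoid" where
  "quot_monoid E = \<lparr>carrier = {{v. E v w} | w. True},
     mult = (\<lambda>X Y. {v. \<exists>x\<in>X. \<exists>y\<in>Y. E v (x @ y)}),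
     one = {v. E v []}\<rparr>"

text \<open>Transition congruence of a left automaton (reading left to right) and of a right
  automaton (reading right to left).\<close>
definition tcong_left :: "('q, 'a) dfa \<Rightarrow> 'a list \<Rightarrow> 'a list \<Rightarrow> bool" where
  "tcong_left A u v \<longleftrightarrow> run_rel A u = run_rel A v"

definition tcong_right :: "('q, 'a) dfa \<Rightarrow> 'a list \<Rightarrow> 'a list \<Rightarrow> bool" where
  "tcong_right A u v \<longleftrightarrow> run_rel A (rev u) = run_rel A (rev v)"

definition V_left_automaton :: "nat monoid set \<Rightarrow> ('q, 'a) dfa \<Rightarrow> bool" where
  "V_left_automaton V A \<longleftrightarrow> in_var V (quot_monoid (tcong_left A))"

definition V_right_automaton :: "nat monoid set \<Rightarrow> ('q, 'a) dfa \<Rightarrow> bool" where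
  "V_right_automaton V A \<longleftrightarrow> in_var V (quot_monoid (tcong_right A))"

text \<open>V-languages: recognised by some V-automaton (states may be taken in nat w.l.o.g.).\<close>
definition V_language :: "nat monoid set \<Rightarrow> 'a list set \<Rightarrow> bool" where
  "V_language V L \<longleftrightarrow> (\<exists>A :: (nat, 'a) dfa. wf_dfa A \<and> V_left_automaton V A \<and> dfa_lang A = L)"

record ('l, 'r, 'a) bimachine =
  bL :: "('l, 'a) dfa"
  bR :: "('r, 'a) dfa"
  bout :: "'l \<Rightarrow> 'a \<Rightarrow> 'r \<Rightarrow> 'a list option"
  blam :: "'r \<Rightarrow> 'a list option"
  brho :: "'l \<Rightarrow> 'a list option"

definition wf_bimachine :: "('l, 'r, 'a) bimachine \<Rightarrow> bool" where
  "wf_bimachine B \<longleftrightarrow> wf_dfa (bL B) \<and> wf_dfa (bR B)"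

definition complete_bimachine :: "('l, 'r, 'a) bimachine \<Rightarrow> bool" where
  "complete_bimachine B \<longleftrightarrow>
     (\<forall>l\<in>states (bL B). \<forall>a. \<forall>r\<in>states (bR B). bout B l a r \<noteq> None)"

definition V_bimachine :: "nat monoid set \<Rightarrow> ('l, 'r, 'a) bimachine \<Rightarrow> bool" where
  "V_bimachine V B \<longleftrightarrow> V_left_automaton V (bL B) \<and> V_right_automaton V (bR B)"

text \<open>l_i = state of L after sigma_1..sigma_i; r_j = state of R after reading the last j
  letters from right to left.\<close>
definition lst :: "('l, 'r, 'a) bimachine \<Rightarrow> 'a list \<Rightarrow> nat \<Rightarrow> 'l option" where
  "lst B u i = steps (bL B) (init (bL B)) (take i u)"

definition rst :: "('l, 'r, 'a) bimachine \<Rightarrow> 'a list \<Rightarrow> nat \<Rightarrow> 'r option" where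
  "rst B u j = steps (bR B) (init (bR B)) (rev (drop (length u - j) u))"

definition bm_sem :: "('l, 'r, 'a) bimachine \<Rightarrow> 'a list \<Rightarrow> 'a list option" where
  "bm_sem B u =
     (let n = length u in
      if (\<forall>i\<le>n. lst B u i \<noteq> None \<and> rst B u i \<noteq> None)
         \<and> blam B (the (rst B u n)) \<noteq> None
         \<and> (\<forall>i\<in>{1..n}. bout B (the (lst B u (i - 1))) (u ! (i - 1)) (the (rst B u (n - i))) \<noteq> None)
         \<and> brho B (the (lst B u n)) \<noteq> None
      then Some (the (blam B (the (rst B u n)))
                 @ concat (map (\<lambda>i. the (bout B (the (lst B u (i - 1))) (u ! (i - 1)) (the (rst B u (n - i))))) [1..<Suc n])
                 @ the (brho B (the (lst B u n))))
      else None)"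

datatype 'a mso =
    Less nat nat
  | Lab 'a nat
  | Mem nat nat           \<comment> \<open>x \<in> X (first-order x, second-order X)\<close>
  | Neg "'a mso"
  | Conj "'a mso" "'a mso"
  | ExF nat "'a mso"
  | ExS nat "'a mso"

fun fvF :: "'a mso \<Rightarrow> nat set" where
  "fvF (Less x y) = {x, y}"
| "fvF (Lab a x) = {x}"
| "fvF (Mem x X) = {x}"
| "fvF (Neg \<phi>) = fvF \<phi>"
| "fvF (Conj \<phi> \<psi>) = fvF \<phi> \<union> fvF \<psi>"
| "fvF (ExF x \<phi>) = fvF \<phi> - {x}"
| "fvF (ExS X \<phi>) = fvF \<phi>"

fun fvS :: "'a mso \<Rightarrow> nat set" where
  "fvS (Less x y) = {}"
| "fvS (Lab a x) = {}"
| "fvS (Mem x X) = {X}"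
| "fvS (Neg \<phi>) = fvS \<phi>"
| "fvS (Conj \<phi> \<psi>) = fvS \<phi> \<union> fvS \<psi>"
| "fvS (ExF x \<phi>) = fvS \<phi>"
| "fvS (ExS X \<phi>) = fvS \<phi> - {X}"

definition closed_mso :: "'a mso \<Rightarrow> bool" where
  "closed_mso \<phi> \<longleftrightarrow> fvF \<phi> = {} \<and> fvS \<phi> = {}"

text \<open>Positions of a word are 0..length w - 1.\<close>
fun sat :: "'a list \<Rightarrow> (nat \<Rightarrow> nat) \<Rightarrow> (nat \<Rightarrow> nat set) \<Rightarrow> 'a mso \<Rightarrow> bool" where
  "sat w I J (Less x y) = (I x < I y)"
| "sat w I J (Lab a x) = (I x < length w \<and> w ! (I x) = a)"
| "sat w I J (Mem x X) = (I x \<in> J X)"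
| "sat w I J (Neg \<phi>) = (\<not> sat w I J \<phi>)"
| "sat w I J (Conj \<phi> \<psi>) = (sat w I J \<phi> \<and> sat w I J \<psi>)"
| "sat w I J (ExF x \<phi>) = (\<exists>p<length w. sat w (I(x := p)) J \<phi>)"
| "sat w I J (ExS X \<phi>) = (\<exists>S\<subseteq>{..<length w}. sat w I (J(X := S)) \<phi>)"

definition models :: "'a list \<Rightarrow> 'a mso \<Rightarrow> bool" (infix "\<Turnstile>" 50) where
  "w \<Turnstile> \<phi> \<longleftrightarrow> sat w (\<lambda>_. 0) (\<lambda>_. {}) \<phi>"

definition unsat :: "'a mso \<Rightarrow> bool" where
  "unsat \<phi> \<longleftrightarrow> \<not> (\<exists>w. w \<Turnstile> \<phi>)"

text \<open>A logic is a fragment F of MSO (a set of formulas).\<close>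
definition F_language :: "'a mso set \<Rightarrow> 'a list set \<Rightarrow> bool" where
  "F_language F L \<longleftrightarrow> (\<exists>\<phi>\<in>F. closed_mso \<phi> \<and> L = {w. w \<Turnstile> \<phi>})"

definition corresponds :: "'a mso set \<Rightarrow> nat monoid set \<Rightarrow> bool" where
  "corresponds F V \<longleftrightarrow> (\<forall>L. F_language F L \<longleftrightarrow> V_language V L)"

record 'a translation =
  tk :: nat
  tS :: "'a list set"
  tL :: "nat \<Rightarrow> 'a \<Rightarrow> 'a list \<Rightarrow> 'a mso"
  tR :: "nat \<Rightarrow> 'a \<Rightarrow> 'a list \<Rightarrow> 'a mso"
  tI :: "'a list \<Rightarrow> 'a mso"
  tT :: "'a list \<Rightarrow> 'a mso"

definition F_translation :: "'a mso set \<Rightarrow> 'a translation \<Rightarrow> bool" where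
  "F_translation F T \<longleftrightarrow>
     tk T > 0 \<and> finite (tS T) \<and>
     (\<forall>j\<in>{1..tk T}. \<forall>\<sigma>. \<forall>v\<in>tS T.
        tL T j \<sigma> v \<in> F \<and> closed_mso (tL T j \<sigma> v) \<and>
        tR T j \<sigma> v \<in> F \<and> closed_mso (tR T j \<sigma> v)) \<and>
     (\<forall>v\<in>tS T. tI T v \<in> F \<and> closed_mso (tI T v) \<and> tT T v \<in> F \<and> closed_mso (tT T v)) \<and>
     \<comment> \<open>exhaustive\<close>
     (\<forall>\<sigma> u w. \<exists>j\<in>{1..tk T}. \<exists>v\<in>tS T. u \<Turnstile> tL T j \<sigma> v \<and> w \<Turnstile> tR T j \<sigma> v) \<and>
     \<comment> \<open>functional\<close>
     (\<forall>v1\<in>tS T. \<forall>v2\<in>tS T. v1 \<noteq> v2 \<longrightarrow>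
        (\<forall>j\<in>{1..tk T}. \<forall>j'\<in>{1..tk T}. \<forall>\<sigma>.
           unsat (Conj (tL T j \<sigma> v1) (tL T j' \<sigma> v2)) \<or> unsat (Conj (tR T j \<sigma> v1) (tR T j' \<sigma> v2))) \<and>
        unsat (Conj (tI T v1) (tI T v2)) \<and> unsat (Conj (tT T v1) (tT T v2)))"

text \<open>Semantics: ws = [w_0, w_1, ..., w_n, w_{n+1}].\<close>
definition trans_rel :: "'a translation \<Rightarrow> ('a list \<times> 'a list) set" where
  "trans_rel T = {(u, w). \<exists>ws. length ws = length u + 2 \<and> w = concat ws \<and>
     (\<forall>x\<in>set ws. x \<in> tS T) \<and>
     (\<forall>i\<in>{1..length u}. \<exists>j\<in>{1..tk T}.
        take (i - 1) u \<Turnstile> tL T j (u ! (i - 1)) (ws ! i) \<and>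
        drop i u \<Turnstile> tR T j (u ! (i - 1)) (ws ! i)) \<and>
     u \<Turnstile> tI T (ws ! 0) \<and> u \<Turnstile> tT T (ws ! (length u + 1))}"

definition definable_by_translation :: "'a mso set \<Rightarrow> ('a list \<Rightarrow> 'a list option) \<Rightarrow> bool" where
  "definable_by_translation F f \<longleftrightarrow>
     (\<exists>T. F_translation F T \<and> {(u, w). f u = Some w} = trans_rel T)"

end

theory Submission imports Defs begin

lemma steps_append: "steps A q (u@v) = (case steps A q u of None \<Rightarrow> None | Some p \<Rightarrow> steps A p v)"
  by (induction u arbitrary: q) (auto split: option.splits)

lemma steps_closed: "wf_dfa A \<Longrightarrow> q \<in> states A \<Longrightarrow> steps A q w = Some p \<Longrightarrow> p \<in> states A"
proof (induction w arbitrary: q)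
  case Nil then show ?case by simp
next
  case (Cons a w)
  then obtain x where x: "trans A q a = Some x" "steps A x w = Some p" by (auto split: option.splits)
  then have "x \<in> states A" using Cons.prems unfolding wf_dfa_def by blast
  then show ?case using Cons.IH Cons.prems x by blast
qed

lemma run_rel_append: "wf_dfa A \<Longrightarrow> run_rel A (u@v) = run_rel A u O run_rel A v"
proof -
  assume wf: "wf_dfa A"
  show ?thesis unfolding run_rel_def
  proof (auto simp: steps_append split: option.splits)
    fix a b x2 assume h: "a \<in> states A" "b \<in> states A" "steps A a u = Some x2" "steps A x2 v = Some b"
    then have "x2 \<in> states A" using steps_closed wf by metis
    then show "(a, b) \<in> {(p, q). p \<in> states A \<and> q \<in> states A \<and> steps A p u = Some q} O
             {(p, q). p \<in> states A \<and> q \<in> states A \<and> steps A p v = Some q}" using h by blast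
  qed
qed

lemma run_rel_Nil: "run_rel A [] = Id_on (states A)"
  unfolding run_rel_def by auto

lemma run_rel_mem: "(x, y) \<in> run_rel A w \<longleftrightarrow> x \<in> states A \<and> y \<in> states A \<and> steps A x w = Some y"
  by (simp add: run_rel_def)

lemma run_rel_sub: "run_rel A w \<subseteq> states A \<times> states A"
  unfolding run_rel_def by auto

lemma V_lang_of_dfa:
  fixes A :: "('q, 'a) dfa"
  assumes wf: "wf_dfa A" and V: "V_left_automaton V A"
  shows "V_language V {w. P (steps A (init A) w)}"
proof -
  from wf have fin: "finite (states A)" by (simp add: wf_dfa_def)
  obtain g :: "'q \<Rightarrow> nat" and n where g: "g ` states A = {i. i < n}" "inj_on g (states A)"
    using finite_imp_inj_to_nat_seg[OF fin] by blast
  define e where "e q = Suc (g q)" for q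
  have einj: "inj_on e (states A)" using g(2) by (auto simp: e_def inj_on_def)
  have e0: "e q \<noteq> 0" "0 < e q" "e q = 0 \<longleftrightarrow> False" for q by (simp_all add: e_def)
  have inv: "q \<in> states A \<Longrightarrow> inv_into (states A) e (e q) = q" for q
    using einj by (simp add: inv_into_f_f)
  define A' :: "(nat, 'a) dfa" where "A' = \<lparr>states = insert 0 (e ` states A), init = e (init A),
     trans = \<lambda>m a. if m \<in> e ` states A then (case trans A (inv_into (states A) e m) a of None \<Rightarrow> Some 0 | Some p \<Rightarrow> Some (e p)) else Some 0,
     final = (if P None then {0} else {}) \<union> e ` {q \<in> states A. P (Some q)}\<rparr>"
  have trA: "trans A' m a = (if m \<in> e ` states A then (case trans A (inv_into (states A) e m) a of None \<Rightarrow> Some 0 | Some p \<Rightarrow> Some (e p)) else Some 0)" for m a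
    by (simp add: A'_def)
  have s0: "steps A' 0 w = Some 0" for w
    by (induction w) (auto simp: trA e0)
  have se: "q \<in> states A \<Longrightarrow> steps A' (e q) w = (case steps A q w of None \<Rightarrow> Some 0 | Some p \<Rightarrow> Some (e p))" for q w
  proof (induction w arbitrary: q)
    case Nil then show ?case by simp
  next
    case (Cons a w)
    show ?case
    proof (cases "trans A q a")
      case None then show ?thesis using Cons by (simp add: trA inv s0)
    next
      case (Some p)
      have "p \<in> states A" using wf Cons.prems Some by (auto simp: wf_dfa_def)
      then show ?thesis using Cons Some by (simp add: trA inv)
    qed
  qed
  have wf': "wf_dfa A'"
    using wf e0 by (auto simp: wf_dfa_def A'_def inv split: option.splits if_splits) (metis e0 less_irrefl)
  have init_in: "init A \<in> states A" using wf by (simp add: wf_dfa_def)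
  have lang: "dfa_lang A' = {w. P (steps A (init A) w)}"
  proof -
    have "w \<in> dfa_lang A' \<longleftrightarrow> P (steps A (init A) w)" for w
    proof (cases "steps A (init A) w")
      case None
      have f0: "0 \<in> final A' \<longleftrightarrow> P None" by (auto simp: A'_def e_def)
      have "steps A' (init A') w = Some 0" using se[OF init_in, of w] None by (simp add: A'_def)
      then show ?thesis using f0 None by (simp add: dfa_lang_def)
    next
      case (Some p)
      have p: "p \<in> states A" using steps_closed[OF wf init_in Some] .
      have "e p \<in> e ` {q \<in> states A. P (Some q)} \<longleftrightarrow> P (Some p)"
        using einj p by (auto simp: inj_on_def)
      then show ?thesis using se[OF init_in, of w] Some e0 by (auto simp: dfa_lang_def A'_def e_def)
    qed
    then show ?thesis by auto
  qed
  have rr: "(x, y) \<in> run_rel A' w \<longleftrightarrow> (x = 0 \<and> y = 0) \<or> (\<exists>p\<in>states A. x = e p \<and>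
      (case steps A p w of None \<Rightarrow> y = 0 | Some q \<Rightarrow> y = e q))" for x y w
  proof
    assume "(x, y) \<in> run_rel A' w"
    then have "x \<in> insert 0 (e ` states A)" "steps A' x w = Some y" by (auto simp: run_rel_def A'_def)
    then show "(x = 0 \<and> y = 0) \<or> (\<exists>p\<in>states A. x = e p \<and> (case steps A p w of None \<Rightarrow> y = 0 | Some q \<Rightarrow> y = e q))"
      using s0 se by (auto split: option.splits)
  next
    assume "(x = 0 \<and> y = 0) \<or> (\<exists>p\<in>states A. x = e p \<and> (case steps A p w of None \<Rightarrow> y = 0 | Some q \<Rightarrow> y = e q))"
    then show "(x, y) \<in> run_rel A' w"
      using s0 se steps_closed[OF wf] by (auto simp: run_rel_def A'_def split: option.splits)
  qed
  have key: "p \<in> states A \<Longrightarrow> steps A p w = None \<longleftrightarrow> (\<forall>q. (p, q) \<notin> run_rel A w)" for p w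
    using steps_closed[OF wf] by (cases "steps A p w") (auto simp: run_rel_def)
  have cong: "tcong_left A' = tcong_left A"
  proof (intro ext)
    fix u v
    show "tcong_left A' u v = tcong_left A u v"
    proof
      assume h: "tcong_left A' u v"
      have eq: "(p, q) \<in> run_rel A w \<longleftrightarrow> (e p, e q) \<in> run_rel A' w" if "p \<in> states A" "q \<in> states A" for p q w
      proof -
        have "(e p, e q) \<in> run_rel A' w \<longleftrightarrow> (\<exists>p'\<in>states A. e p = e p' \<and> (case steps A p' w of None \<Rightarrow> e q = 0 | Some q' \<Rightarrow> e q = e q'))"
          using rr[of "e p" "e q" w] by (simp add: e_def)
        also have "\<dots> \<longleftrightarrow> (case steps A p w of None \<Rightarrow> e q = 0 | Some q' \<Rightarrow> e q = e q')"
        proof -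
          have "\<forall>p'\<in>states A. e p = e p' \<longrightarrow> p' = p" using einj that(1) unfolding inj_on_def by metis
          then show ?thesis using that(1) by blast
        qed
        also have "\<dots> \<longleftrightarrow> (case steps A p w of None \<Rightarrow> False | Some q' \<Rightarrow> q = q')"
        proof (cases "steps A p w")
          case None then show ?thesis by (simp add: e_def)
        next
          case (Some q')
          then have "q' \<in> states A" using steps_closed[OF wf that(1)] by blast
          then show ?thesis using Some einj that(2) unfolding inj_on_def by auto
        qed
        also have "\<dots> \<longleftrightarrow> (p, q) \<in> run_rel A w"
          using that by (auto simp: run_rel_def split: option.splits)
        finally show ?thesis by simp
      qed
      have "(p,q) \<in> run_rel A u \<longleftrightarrow> (p,q) \<in> run_rel A v" for p q
      proof (cases "p \<in> states A \<and> q \<in> states A")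
        case True then show ?thesis using eq[of p q] h by (simp add: tcong_left_def)
      next
        case False then show ?thesis by (auto simp: run_rel_def)
      qed
      then show "tcong_left A u v" unfolding tcong_left_def by auto
    next
      assume h: "tcong_left A u v"
      then have h': "run_rel A u = run_rel A v" by (simp add: tcong_left_def)
      have "steps A p u = steps A p v" if "p \<in> states A" for p
      proof (cases "steps A p u")
        case None
        then have "steps A p v = None" using key[OF that, of u] key[OF that, of v] h' by simp
        then show ?thesis using None by simp
      next
        case (Some q)
        then have "(p, q) \<in> run_rel A u" using steps_closed[OF wf that] that by (auto simp: run_rel_def)
        then have "(p, q) \<in> run_rel A v" using h' by simp
        then show ?thesis using Some by (simp add: run_rel_def)
      qed
      then have "(x,y) \<in> run_rel A' u \<longleftrightarrow> (x,y) \<in> run_rel A' v" for x y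
        unfolding rr by (intro disj_cong refl bex_cong) simp
      then show "tcong_left A' u v" unfolding tcong_left_def by auto
    qed
  qed
  show ?thesis unfolding V_language_def
    by (rule exI[of _ A']) (use wf' lang V cong in \<open>simp add: V_left_automaton_def\<close>)
qed

lemma V_lang_of_right:
  fixes R :: "('r, 'a) dfa"
  assumes wf: "wf_dfa R" and V: "V_right_automaton V R"
  shows "V_language V {w. P (steps R (init R) (rev w))}"
proof -
  define Rl :: "(('r \<times> 'r) set, 'a) dfa" where "Rl = \<lparr>states = {run_rel R y | y. True}, init = run_rel R [],
     trans = \<lambda>X a. Some (run_rel R [a] O X), final = {}\<rparr>"
  have trR: "trans Rl X a = Some (run_rel R [a] O X)" for X a by (simp add: Rl_def)
  have stR: "steps Rl (run_rel R y) w = Some (run_rel R (rev w @ y))" for y w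
  proof (induction w arbitrary: y)
    case Nil then show ?case by simp
  next
    case (Cons a w)
    have "run_rel R [a] O run_rel R y = run_rel R (a # y)" using run_rel_append[OF wf, of "[a]" y] by simp
    then show ?case using Cons[of "a # y"] by (simp add: trR)
  qed
  have wfR: "wf_dfa Rl"
  proof -
    have sub: "states Rl \<subseteq> Pow (states R \<times> states R)" using run_rel_sub by (auto simp: Rl_def)
    have "finite (states R)" using wf by (simp add: wf_dfa_def)
    then have "finite (Pow (states R \<times> states R))" by simp
    then have fin: "finite (states Rl)" using sub by (rule finite_subset[rotated])
    have cl: "p \<in> states Rl" if "q \<in> states Rl" "trans Rl q a = Some p" for q a p
    proof -
      have "q \<in> {run_rel R y | y. True}" using that(1) by (simp add: Rl_def)
      then obtain y where "q = run_rel R y" by blast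
      then have "p = run_rel R ([a] @ y)" using that(2) run_rel_append[OF wf, of "[a]" y] by (simp add: trR)
      then show ?thesis by (auto simp: Rl_def)
    qed
    have "init Rl \<in> states Rl" by (auto simp: Rl_def)
    moreover have "final Rl \<subseteq> states Rl" by (simp add: Rl_def)
    ultimately show ?thesis using fin cl unfolding wf_dfa_def by blast
  qed
  have cong: "tcong_left Rl = tcong_right R"
  proof (intro ext)
    fix u v
    have rr: "run_rel Rl w = {(run_rel R y, run_rel R (rev w @ y)) | y. True}" for w
    proof -
      have sR: "states Rl = {run_rel R y | y. True}" by (simp add: Rl_def)
      show ?thesis
      proof (intro equalityI subsetI)
        fix z assume "z \<in> run_rel Rl w"
        moreover obtain a b where ab: "z = (a, b)" by (cases z)
        ultimately have "(a, b) \<in> run_rel Rl w" by simp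
        then have "a \<in> states Rl" "steps Rl a w = Some b" by (simp_all add: run_rel_mem)
        then obtain y where y: "a = run_rel R y" "steps Rl a w = Some b" unfolding sR by blast
        then have "b = run_rel R (rev w @ y)" using stR[of y w] by simp
        then show "z \<in> {(run_rel R y, run_rel R (rev w @ y)) | y. True}" using ab y(1) by blast
      next
        fix z assume "z \<in> {(run_rel R y, run_rel R (rev w @ y)) | y. True}"
        then obtain y where zy: "z = (run_rel R y, run_rel R (rev w @ y))" by auto
        have "(run_rel R y, run_rel R (rev w @ y)) \<in> run_rel Rl w" unfolding run_rel_mem sR using stR by blast
        then show "z \<in> run_rel Rl w" using zy by simp
      qed
    qed
    show "tcong_left Rl u v = tcong_right R u v"
    proof
      assume "tcong_left Rl u v"
      then have eqr: "run_rel Rl u = run_rel Rl v" unfolding tcong_left_def .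
      have "(run_rel R [], run_rel R (rev u @ [])) \<in> run_rel Rl u" unfolding rr by blast
      then have "(run_rel R [], run_rel R (rev u)) \<in> run_rel Rl v" using eqr by simp
      then obtain y where y: "run_rel R [] = run_rel R y" "run_rel R (rev u) = run_rel R (rev v @ y)"
        unfolding rr by blast
      have "run_rel R (rev v @ y) = run_rel R (rev v) O run_rel R y" by (rule run_rel_append[OF wf])
      also have "\<dots> = run_rel R (rev v) O Id_on (states R)" using y(1) by (simp add: run_rel_Nil)
      also have "\<dots> = run_rel R (rev v)" using run_rel_sub[of R "rev v"] by blast
      finally show "tcong_right R u v" using y(2) by (simp add: tcong_right_def)
    next
      assume "tcong_right R u v"
      then have "run_rel R (rev u @ y) = run_rel R (rev v @ y)" for y
        by (simp add: tcong_right_def run_rel_append[OF wf])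
      then show "tcong_left Rl u v" unfolding tcong_left_def rr by simp
    qed
  qed
  have VR: "V_left_automaton V Rl" using V cong by (simp add: V_left_automaton_def V_right_automaton_def)
  define Q where "Q X = P (if \<exists>q. (init R, q) \<in> X then Some (THE q. (init R, q) \<in> X) else None)" for X
  have iR: "init R \<in> states R" using wf by (simp add: wf_dfa_def)
  have "Q (run_rel R (rev w)) = P (steps R (init R) (rev w))" for w
  proof (cases "steps R (init R) (rev w)")
    case None then show ?thesis by (simp add: Q_def run_rel_def)
  next
    case (Some q)
    then have "(init R, q) \<in> run_rel R (rev w)" using steps_closed[OF wf iR] iR by (auto simp: run_rel_def)
    moreover have "(init R, q') \<in> run_rel R (rev w) \<Longrightarrow> q' = q" for q' using Some by (simp add: run_rel_def)
    ultimately have "(THE q. (init R, q) \<in> run_rel R (rev w)) = q" by (rule the_equality)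
    then show ?thesis using Some \<open>(init R, q) \<in> run_rel R (rev w)\<close> by (auto simp: Q_def)
  qed
  moreover have "steps Rl (init Rl) w = Some (run_rel R (rev w))" for w
    using stR[of "[]" w] by (simp add: Rl_def)
  ultimately have "{w. P (steps R (init R) (rev w))} = {w. (\<lambda>x. Q (the x)) (steps Rl (init Rl) w)}" by simp
  then show ?thesis using V_lang_of_dfa[OF wfR VR, of "\<lambda>x. Q (the x)"] by simp
qed
lemma steps_take_None: "steps A q (take i u) = None \<Longrightarrow> steps A q u = None"
  using steps_append[of A q "take i u" "drop i u"] by simp

lemma steps_drop_None: "steps A q (rev (drop i u)) = None \<Longrightarrow> steps A q (rev u) = None"
proof -
  assume h: "steps A q (rev (drop i u)) = None"
  have e: "rev u = rev (drop i u) @ rev (take i u)" by (simp flip: rev_append)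
  show ?thesis unfolding e steps_append h by simp
qed

lemma bm_sem_eq:
  assumes wf: "wf_bimachine B" and co: "complete_bimachine B"
  shows "bm_sem B u = (if (\<exists>l. steps (bL B) (init (bL B)) u = Some l \<and> brho B l \<noteq> None) \<and>
       (\<exists>r. steps (bR B) (init (bR B)) (rev u) = Some r \<and> blam B r \<noteq> None)
     then Some (the (blam B (the (rst B u (length u))))
                 @ concat (map (\<lambda>i. the (bout B (the (lst B u (i - 1))) (u ! (i - 1)) (the (rst B u (length u - i))))) [1..<Suc (length u)])
                 @ the (brho B (the (lst B u (length u)))))
     else None)"
proof -
  define n where "n = length u"
  have wfL: "wf_dfa (bL B)" and wfR: "wf_dfa (bR B)" using wf by (auto simp: wf_bimachine_def)
  have iL: "init (bL B) \<in> states (bL B)" and iR: "init (bR B) \<in> states (bR B)"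
    using wfL wfR by (auto simp: wf_dfa_def)
  have ln: "lst B u n = steps (bL B) (init (bL B)) u" by (simp add: lst_def n_def)
  have rn: "rst B u n = steps (bR B) (init (bR B)) (rev u)" by (simp add: rst_def n_def)
  have C: "(\<forall>i\<le>n. lst B u i \<noteq> None \<and> rst B u i \<noteq> None) \<longleftrightarrow>
     steps (bL B) (init (bL B)) u \<noteq> None \<and> steps (bR B) (init (bR B)) (rev u) \<noteq> None"
  proof
    assume "\<forall>i\<le>n. lst B u i \<noteq> None \<and> rst B u i \<noteq> None"
    then have "lst B u n \<noteq> None \<and> rst B u n \<noteq> None" by blast
    then show "steps (bL B) (init (bL B)) u \<noteq> None \<and> steps (bR B) (init (bR B)) (rev u) \<noteq> None"
      using ln rn by simp
  next
    assume h: "steps (bL B) (init (bL B)) u \<noteq> None \<and> steps (bR B) (init (bR B)) (rev u) \<noteq> None"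
    show "\<forall>i\<le>n. lst B u i \<noteq> None \<and> rst B u i \<noteq> None"
    proof (intro allI impI conjI)
      fix i assume "i \<le> n"
      show "lst B u i \<noteq> None"
      proof
        assume "lst B u i = None"
        then have "steps (bL B) (init (bL B)) u = None" unfolding lst_def by (rule steps_take_None)
        then show False using h by simp
      qed
      show "rst B u i \<noteq> None"
      proof
        assume "rst B u i = None"
        then have "steps (bR B) (init (bR B)) (rev u) = None" unfolding rst_def by (rule steps_drop_None)
        then show False using h by simp
      qed
    qed
  qed
  have C3: "\<forall>i\<in>{1..n}. bout B (the (lst B u (i - 1))) (u ! (i - 1)) (the (rst B u (n - i))) \<noteq> None"
    if h: "steps (bL B) (init (bL B)) u \<noteq> None \<and> steps (bR B) (init (bR B)) (rev u) \<noteq> None"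
  proof
    fix i assume i: "i \<in> {1..n}"
    obtain l where l: "lst B u (i - 1) = Some l" using h C i by fastforce
    obtain r where r: "rst B u (n - i) = Some r" using h C i by fastforce
    have "l \<in> states (bL B)" using l steps_closed[OF wfL iL] by (simp add: lst_def)
    moreover have "r \<in> states (bR B)" using r steps_closed[OF wfR iR] by (simp add: rst_def)
    ultimately show "bout B (the (lst B u (i - 1))) (u ! (i - 1)) (the (rst B u (n - i))) \<noteq> None"
      using co l r by (simp add: complete_bimachine_def)
  qed
  show ?thesis
  proof (cases "steps (bL B) (init (bL B)) u \<noteq> None \<and> steps (bR B) (init (bR B)) (rev u) \<noteq> None")
    case True
    have c3: "(\<forall>i\<in>{1..n}. bout B (the (lst B u (i - 1))) (u ! (i - 1)) (the (rst B u (n - i))) \<noteq> None) = True"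
      using C3[OF True] by simp
    show ?thesis unfolding bm_sem_def Let_def n_def[symmetric] C c3 using True ln rn by auto
  next
    case False
    then show ?thesis unfolding bm_sem_def Let_def n_def[symmetric] C by auto
  qed
qed
lemma models_Conj: "w \<Turnstile> Conj a b \<longleftrightarrow> w \<Turnstile> a \<and> w \<Turnstile> b"
  by (simp add: models_def)

lemma nth_decomp: "i \<le> Suc n \<Longrightarrow> (a # map f [1..<Suc n] @ [b]) ! i = (if i = 0 then a else if i \<le> n then f i else b)"
proof (cases i)
  case 0 then show ?thesis by simp
next
  case (Suc m)
  assume i: "i \<le> Suc n"
  show ?thesis
  proof (cases "m < n")
    case True
    have "(map f [1..<Suc n] @ [b]) ! m = f ([1..<Suc n] ! m)" using True by (simp add: nth_append del: upt_Suc)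
    also have "[1..<Suc n] ! m = Suc m" using True by (simp del: upt_Suc)
    finally show ?thesis using Suc True by simp
  next
    case False then have "m = n" using i Suc by simp
    then show ?thesis using Suc by (simp add: nth_append del: upt_Suc)
  qed
qed

lemma list_decomp: "length ws = Suc (Suc n) \<Longrightarrow> ws = ws ! 0 # map (\<lambda>i. ws ! i) [1..<Suc n] @ [ws ! Suc n]"
proof (rule nth_equalityI)
  assume l: "length ws = Suc (Suc n)"
  then show "length ws = length (ws ! 0 # map (\<lambda>i. ws ! i) [1..<Suc n] @ [ws ! Suc n])" by (simp del: upt_Suc)
  fix i assume "i < length ws"
  then have i: "i \<le> Suc n" using l by simp
  have "ws ! i = (if i = 0 then ws ! 0 else if i \<le> n then ws ! i else ws ! Suc n)"
    using i by (auto simp: le_Suc_eq)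
  then show "ws ! i = (ws ! 0 # map (\<lambda>i. ws ! i) [1..<Suc n] @ [ws ! Suc n]) ! i"
    using nth_decomp[OF i, of "ws ! 0" "\<lambda>i. ws ! i" "ws ! Suc n"] by simp
qed

theorem mainTheorem3:
  fixes V :: "nat monoid set"
    and F :: "('a::finite) mso set"
    and B :: "('l, 'r, 'a) bimachine"
    and f :: "'a list \<Rightarrow> 'a list option"
  assumes "monoid_variety V"
    and "corresponds F V"
    and "wf_bimachine B" and "complete_bimachine B" and "V_bimachine V B"
    and "f = bm_sem B"
  shows "definable_by_translation F f"
proof -
  note corr = assms(2) and wf = assms(3) and co = assms(4)
  define L where "L = bL B"
  define R where "R = bR B"
  have wfL: "wf_dfa L" and wfR: "wf_dfa R" using wf by (auto simp: wf_bimachine_def L_def R_def)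
  have VL: "V_left_automaton V L" and VR: "V_right_automaton V R"
    using assms(5) by (auto simp: V_bimachine_def L_def R_def)
  have iL: "init L \<in> states L" and iR: "init R \<in> states R"
    using wfL wfR by (auto simp: wf_dfa_def)
  define fm where "fm Lang = (SOME \<phi>. \<phi> \<in> F \<and> closed_mso \<phi> \<and> Lang = {w. w \<Turnstile> \<phi>})" for Lang
  have fmI: "fm Lang \<in> F \<and> closed_mso (fm Lang) \<and> (\<forall>w. w \<Turnstile> fm Lang \<longleftrightarrow> w \<in> Lang)"
    if "V_language V Lang" for Lang
  proof -
    have "F_language F Lang" using corr that by (simp add: corresponds_def)
    then have "\<exists>\<phi>. \<phi> \<in> F \<and> closed_mso \<phi> \<and> Lang = {w. w \<Turnstile> \<phi>}" by (auto simp: F_language_def)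
    then have "fm Lang \<in> F \<and> closed_mso (fm Lang) \<and> Lang = {w. w \<Turnstile> fm Lang}"
      unfolding fm_def by (rule someI_ex)
    then show ?thesis by auto
  qed
  define Lf where "Lf lo = fm {u. steps L (init L) u = lo}" for lo
  define Rf where "Rf ro = fm {u. steps R (init R) (rev u) = ro}" for ro
  define Ff where "Ff = fm {}"
  define Iff0 where "Iff0 v = fm {u. \<exists>r. steps R (init R) (rev u) = Some r \<and> blam B r = Some v}" for v
  define Tf where "Tf v = fm {u. \<exists>l. steps L (init L) u = Some l \<and> brho B l = Some v}" for v
  have Lf: "Lf lo \<in> F \<and> closed_mso (Lf lo) \<and> (\<forall>w. w \<Turnstile> Lf lo \<longleftrightarrow> steps L (init L) w = lo)" for lo
    unfolding Lf_def using fmI V_lang_of_dfa[OF wfL VL, of "\<lambda>x. x = lo"] by simp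
  have Rf: "Rf ro \<in> F \<and> closed_mso (Rf ro) \<and> (\<forall>w. w \<Turnstile> Rf ro \<longleftrightarrow> steps R (init R) (rev w) = ro)" for ro
    unfolding Rf_def using fmI V_lang_of_right[OF wfR VR, of "\<lambda>x. x = ro"] by simp
  have Ff: "Ff \<in> F \<and> closed_mso Ff \<and> (\<forall>w. \<not> w \<Turnstile> Ff)"
    unfolding Ff_def using fmI V_lang_of_dfa[OF wfL VL, of "\<lambda>x. False"] by simp
  have Iff0: "Iff0 v \<in> F \<and> closed_mso (Iff0 v) \<and> (\<forall>w. w \<Turnstile> Iff0 v \<longleftrightarrow> (\<exists>r. steps R (init R) (rev w) = Some r \<and> blam B r = Some v))" for v
    unfolding Iff0_def using fmI V_lang_of_right[OF wfR VR, of "\<lambda>x. \<exists>r. x = Some r \<and> blam B r = Some v"] by simp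
  have Tf: "Tf v \<in> F \<and> closed_mso (Tf v) \<and> (\<forall>w. w \<Turnstile> Tf v \<longleftrightarrow> (\<exists>l. steps L (init L) w = Some l \<and> brho B l = Some v))" for v
    unfolding Tf_def using fmI V_lang_of_dfa[OF wfL VL, of "\<lambda>x. \<exists>l. x = Some l \<and> brho B l = Some v"] by simp
  define J where "J = (insert None (Some ` states L)) \<times> (insert None (Some ` states R))"
  have finJ: "finite J" using wfL wfR by (simp add: J_def wf_dfa_def)
  have J0: "(None, None) \<in> J" by (simp add: J_def)
  obtain idx where idx: "bij_betw idx {1..card J} J" using ex_bij_betw_nat_finite_1[OF finJ] by blast
  define k where "k = card J"
  have kpos: "k > 0" using finJ J0 by (auto simp: k_def card_gt_0_iff)
  have idxJ: "j \<in> {1..k} \<Longrightarrow> idx j \<in> J" for j using idx by (auto simp: k_def bij_betw_def)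
  have idx_onto: "\<exists>j\<in>{1..k}. idx j = x" if "x \<in> J" for x
  proof -
    have "x \<in> idx ` {1..k}" using idx that by (simp add: bij_betw_def k_def)
    then obtain j where "j \<in> {1..k}" "x = idx j" by (rule imageE)
    then show ?thesis by blast
  qed
  define out where "out x \<sigma> = (case x of (Some l, Some r) \<Rightarrow> the (bout B l \<sigma> r) | _ \<Rightarrow> [])"
    for x :: "'l option \<times> 'r option" and \<sigma>
  define S where "S = insert [] ((\<lambda>(x, \<sigma>). out x \<sigma>) ` (J \<times> UNIV) \<union>
     (\<lambda>r. the (blam B r)) ` {r \<in> states R. blam B r \<noteq> None} \<union>
     (\<lambda>l. the (brho B l)) ` {l \<in> states L. brho B l \<noteq> None})"
  have finS: "finite S" using finJ wfL wfR by (simp add: S_def wf_dfa_def)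
  define tLf where "tLf j \<sigma> v = (if out (idx j) \<sigma> = v then Lf (fst (idx j)) else Ff)" for j \<sigma> v
  define tRf where "tRf j \<sigma> v = (if out (idx j) \<sigma> = v then Rf (snd (idx j)) else Ff)" for j \<sigma> v
  have mL: "w \<Turnstile> tLf j \<sigma> v \<longleftrightarrow> out (idx j) \<sigma> = v \<and> steps L (init L) w = fst (idx j)" for w j \<sigma> v
    using Lf Ff by (simp add: tLf_def)
  have mR: "w \<Turnstile> tRf j \<sigma> v \<longleftrightarrow> out (idx j) \<sigma> = v \<and> steps R (init R) (rev w) = snd (idx j)" for w j \<sigma> v
    using Rf Ff by (simp add: tRf_def)
  have mI: "w \<Turnstile> Iff0 v \<longleftrightarrow> (\<exists>r. steps R (init R) (rev w) = Some r \<and> blam B r = Some v)" for w v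
    using Iff0 by simp
  have mT: "w \<Turnstile> Tf v \<longleftrightarrow> (\<exists>l. steps L (init L) w = Some l \<and> brho B l = Some v)" for w v
    using Tf by simp
  define T where "T = \<lparr>tk = k, tS = S, tL = tLf, tR = tRf, tI = Iff0, tT = Tf\<rparr>"
  have inJ: "(steps L (init L) u, steps R (init R) (rev w)) \<in> J" for u w
  proof -
    have "steps L (init L) u \<in> insert None (Some ` states L)"
      using steps_closed[OF wfL iL, of u] by (cases "steps L (init L) u") auto
    moreover have "steps R (init R) (rev w) \<in> insert None (Some ` states R)"
      using steps_closed[OF wfR iR, of "rev w"] by (cases "steps R (init R) (rev w)") auto
    ultimately show ?thesis unfolding J_def mem_Sigma_iff by (intro conjI)
  qed
  have outS: "x \<in> J \<Longrightarrow> out x \<sigma> \<in> S" for x \<sigma> by (auto simp: S_def)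
  have FT: "F_translation F T"
    unfolding F_translation_def
  proof (intro conjI)
    show "0 < tk T" using kpos by (simp add: T_def)
    show "finite (tS T)" using finS by (simp add: T_def)
    show "\<forall>j\<in>{1..tk T}. \<forall>\<sigma>. \<forall>v\<in>tS T. tL T j \<sigma> v \<in> F \<and> closed_mso (tL T j \<sigma> v) \<and> tR T j \<sigma> v \<in> F \<and> closed_mso (tR T j \<sigma> v)"
    proof (intro ballI allI)
      fix j \<sigma> v
      have "tLf j \<sigma> v \<in> F \<and> closed_mso (tLf j \<sigma> v)"
        unfolding tLf_def using Lf[of "fst (idx j)"] Ff by (cases "out (idx j) \<sigma> = v") simp_all
      moreover have "tRf j \<sigma> v \<in> F \<and> closed_mso (tRf j \<sigma> v)"
        unfolding tRf_def using Rf[of "snd (idx j)"] Ff by (cases "out (idx j) \<sigma> = v") simp_all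
      ultimately show "tL T j \<sigma> v \<in> F \<and> closed_mso (tL T j \<sigma> v) \<and> tR T j \<sigma> v \<in> F \<and> closed_mso (tR T j \<sigma> v)"
        by (simp add: T_def)
    qed
    show "\<forall>v\<in>tS T. tI T v \<in> F \<and> closed_mso (tI T v) \<and> tT T v \<in> F \<and> closed_mso (tT T v)"
    proof
      fix v
      have "Iff0 v \<in> F \<and> closed_mso (Iff0 v)" using Iff0[of v] by (elim conjE) (intro conjI)
      moreover have "Tf v \<in> F \<and> closed_mso (Tf v)" using Tf[of v] by (elim conjE) (intro conjI)
      ultimately show "tI T v \<in> F \<and> closed_mso (tI T v) \<and> tT T v \<in> F \<and> closed_mso (tT T v)"
        by (simp add: T_def)
    qed
    show "\<forall>\<sigma> u w. \<exists>j\<in>{1..tk T}. \<exists>v\<in>tS T. u \<Turnstile> tL T j \<sigma> v \<and> w \<Turnstile> tR T j \<sigma> v"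
    proof (intro allI)
      fix \<sigma> u w
      obtain j where j: "j \<in> {1..k}" "idx j = (steps L (init L) u, steps R (init R) (rev w))"
        using idx_onto[OF inJ] by blast
      have "out (idx j) \<sigma> \<in> S" using outS j inJ by simp
      then show "\<exists>j\<in>{1..tk T}. \<exists>v\<in>tS T. u \<Turnstile> tL T j \<sigma> v \<and> w \<Turnstile> tR T j \<sigma> v"
      proof (intro bexI)
        show "j \<in> {1..tk T}" using j by (simp add: T_def)
        show "out (idx j) \<sigma> \<in> tS T" using \<open>out (idx j) \<sigma> \<in> S\<close> by (simp add: T_def)
        show "u \<Turnstile> tL T j \<sigma> (out (idx j) \<sigma>) \<and> w \<Turnstile> tR T j \<sigma> (out (idx j) \<sigma>)"
          using j(2) by (simp add: T_def mL mR)
      qed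
    qed
    show "\<forall>v1\<in>tS T. \<forall>v2\<in>tS T. v1 \<noteq> v2 \<longrightarrow>
        (\<forall>j\<in>{1..tk T}. \<forall>j'\<in>{1..tk T}. \<forall>\<sigma>.
           unsat (Conj (tL T j \<sigma> v1) (tL T j' \<sigma> v2)) \<or> unsat (Conj (tR T j \<sigma> v1) (tR T j' \<sigma> v2))) \<and>
        unsat (Conj (tI T v1) (tI T v2)) \<and> unsat (Conj (tT T v1) (tT T v2))"
    proof (intro ballI impI conjI allI)
      fix v1 v2 :: "'a list" and j j' :: nat and \<sigma> :: 'a assume ne: "v1 \<noteq> v2"
      show "unsat (Conj (tL T j \<sigma> v1) (tL T j' \<sigma> v2)) \<or> unsat (Conj (tR T j \<sigma> v1) (tR T j' \<sigma> v2))"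
      proof (rule ccontr)
        assume "\<not> ?thesis"
        then have "\<exists>u. u \<Turnstile> tLf j \<sigma> v1 \<and> u \<Turnstile> tLf j' \<sigma> v2" "\<exists>w. w \<Turnstile> tRf j \<sigma> v1 \<and> w \<Turnstile> tRf j' \<sigma> v2"
          unfolding unsat_def models_Conj T_def translation.simps by blast+
        then obtain u w where u: "u \<Turnstile> tLf j \<sigma> v1" "u \<Turnstile> tLf j' \<sigma> v2" and w: "w \<Turnstile> tRf j \<sigma> v1" "w \<Turnstile> tRf j' \<sigma> v2"
          by blast
        have 1: "out (idx j) \<sigma> = v1" "out (idx j') \<sigma> = v2" "fst (idx j) = fst (idx j')"
          using u unfolding mL by metis+
        have "snd (idx j) = snd (idx j')" using w unfolding mR by metis
        then have "idx j = idx j'" using 1(3) by (simp add: prod_eq_iff)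
        then show False using ne 1 by simp
      qed
    next
      fix v1 v2 :: "'a list" assume ne: "v1 \<noteq> v2"
      show "unsat (Conj (tI T v1) (tI T v2))" unfolding unsat_def models_Conj
      proof
        assume "\<exists>w. w \<Turnstile> tI T v1 \<and> w \<Turnstile> tI T v2"
        then obtain w r1 r2 where "steps R (init R) (rev w) = Some r1" "blam B r1 = Some v1"
          "steps R (init R) (rev w) = Some r2" "blam B r2 = Some v2" unfolding T_def translation.simps mI by blast
        then show False using ne by simp
      qed
      show "unsat (Conj (tT T v1) (tT T v2))" unfolding unsat_def models_Conj
      proof
        assume "\<exists>w. w \<Turnstile> tT T v1 \<and> w \<Turnstile> tT T v2"
        then obtain w r1 r2 where "steps L (init L) w = Some r1" "brho B r1 = Some v1"
          "steps L (init L) w = Some r2" "brho B r2 = Some v2" unfolding T_def translation.simps mT by blast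
        then show False using ne by simp
      qed
    qed
  qed
  have lstS: "\<exists>q. lst B u i = Some q \<and> q \<in> states L"
    if "steps L (init L) u = Some l" for u i l
  proof -
    have "steps (bL B) (init (bL B)) (take i u) \<noteq> None"
      using that steps_take_None[of "bL B" "init (bL B)" i u] by (auto simp: L_def)
    then have "lst B u i \<noteq> None" by (simp add: lst_def)
    then obtain q where q: "lst B u i = Some q" by blast
    then have "q \<in> states L" using steps_closed[OF wfL iL] by (simp add: lst_def L_def)
    then show ?thesis using q by blast
  qed
  have rstS: "\<exists>q. rst B u i = Some q \<and> q \<in> states R"
    if "steps R (init R) (rev u) = Some r" for u i r
  proof -
    have "steps (bR B) (init (bR B)) (rev (drop (length u - i) u)) \<noteq> None"
      using that steps_drop_None[of "bR B" "init (bR B)" "length u - i" u] by (auto simp: R_def)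
    then have "rst B u i \<noteq> None" by (simp add: rst_def)
    then obtain q where q: "rst B u i = Some q" by blast
    then have "q \<in> states R" using steps_closed[OF wfR iR] by (simp add: rst_def R_def)
    then show ?thesis using q by blast
  qed
  have lst_eq: "lst B u i = steps L (init L) (take i u)" for u i by (simp add: lst_def L_def)
  have rst_eq: "i \<le> length u \<Longrightarrow> rst B u (length u - i) = steps R (init R) (rev (drop i u))" for u i
    by (simp add: rst_def R_def)
  have lst_n: "lst B u (length u) = steps L (init L) u" for u by (simp add: lst_eq)
  have rst_n: "rst B u (length u) = steps R (init R) (rev u)" for u using rst_eq[of 0 u] by simp
  have bmE: "bm_sem B u = (if (\<exists>l. steps L (init L) u = Some l \<and> brho B l \<noteq> None) \<and>
       (\<exists>r. steps R (init R) (rev u) = Some r \<and> blam B r \<noteq> None)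
     then Some (the (blam B (the (rst B u (length u))))
                 @ concat (map (\<lambda>i. the (bout B (the (lst B u (i - 1))) (u ! (i - 1)) (the (rst B u (length u - i))))) [1..<Suc (length u)])
                 @ the (brho B (the (lst B u (length u)))))
     else None)" for u
    using bm_sem_eq[OF wf co, of u] by (simp add: L_def R_def)
  have rel: "{(u, w). f u = Some w} = trans_rel T"
  proof (intro equalityI subsetI)
    fix z assume "z \<in> {(u, w). f u = Some w}"
    then obtain u w where z: "z = (u, w)" and fw: "bm_sem B u = Some w" using assms(6) by auto
    define n where "n = length u"
    define mid where "mid = (\<lambda>i. the (bout B (the (lst B u (i - 1))) (u ! (i - 1)) (the (rst B u (n - i)))))"
    define a0 where "a0 = the (blam B (the (rst B u n)))"
    define an where "an = the (brho B (the (lst B u n)))"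
    define ws where "ws = a0 # map mid [1..<Suc n] @ [an]"
    obtain l r where l: "steps L (init L) u = Some l" "brho B l \<noteq> None"
      and r: "steps R (init R) (rev u) = Some r" "blam B r \<noteq> None"
      and wdef: "w = a0 @ concat (map mid [1..<Suc n]) @ an"
      using fw bmE[of u] unfolding mid_def a0_def an_def n_def by (auto split: if_splits)
    have ln: "lst B u n = Some l" using l lst_n by (simp add: n_def)
    have rn: "rst B u n = Some r" using r rst_n by (simp add: n_def)
    have lS: "l \<in> states L" using steps_closed[OF wfL iL l(1)] .
    have rS: "r \<in> states R" using steps_closed[OF wfR iR r(1)] .
    have wsn: "ws ! i = (if i = 0 then a0 else if i \<le> n then mid i else an)" if "i \<le> Suc n" for i
      unfolding ws_def by (rule nth_decomp[OF that])
    have midS: "mid i = out (lst B u (i - 1), rst B u (n - i)) (u ! (i - 1))" for i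
    proof -
      obtain q where q: "lst B u (i - 1) = Some q" using lstS[OF l(1), of "i - 1"] by blast
      obtain q' where q': "rst B u (n - i) = Some q'" using rstS[OF r(1), of "n - i"] by blast
      show ?thesis unfolding mid_def out_def q q' by simp
    qed
    have inJ': "(lst B u (i - 1), rst B u (n - i)) \<in> J" if "i \<in> {1..n}" for i
      using inJ[of "take (i - 1) u" "drop i u"] that lst_eq rst_eq[of i u] by (simp add: n_def)
    show "z \<in> trans_rel T"
      unfolding trans_rel_def z
    proof (intro CollectI case_prodI exI[of _ ws] conjI ballI)
      show "length ws = length u + 2" by (simp add: ws_def n_def del: upt_Suc)
      show "w = concat ws" by (simp add: ws_def wdef)
      fix x assume "x \<in> set ws"
      then have "x = a0 \<or> x = an \<or> (\<exists>i\<in>{1..n}. x = mid i)" unfolding ws_def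
        by (auto simp del: upt_Suc)
      then consider "x = a0" | "x = an" | i where "i \<in> {1..n}" "x = mid i" by blast
      then show "x \<in> tS T"
      proof cases
        case 1 then show ?thesis using rn r(2) rS by (auto simp: T_def S_def a0_def)
      next
        case 2 then show ?thesis using ln l(2) lS by (auto simp: T_def S_def an_def)
      next
        case 3 then show ?thesis using outS[OF inJ'] midS by (simp add: T_def)
      qed
    next
      fix i assume i: "i \<in> {1..length u}"
      then have i': "i \<in> {1..n}" by (simp add: n_def)
      obtain j where j: "j \<in> {1..k}" "idx j = (lst B u (i - 1), rst B u (n - i))"
        using idx_onto[OF inJ'[OF i']] by blast
      have wsi: "ws ! i = mid i" using wsn[of i] i' by simp
      show "\<exists>j\<in>{1..tk T}. take (i - 1) u \<Turnstile> tL T j (u ! (i - 1)) (ws ! i) \<and> drop i u \<Turnstile> tR T j (u ! (i - 1)) (ws ! i)"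
      proof (intro bexI conjI)
        show "j \<in> {1..tk T}" using j by (simp add: T_def)
        show "take (i - 1) u \<Turnstile> tL T j (u ! (i - 1)) (ws ! i)"
          unfolding T_def translation.simps mL using j(2) wsi midS lst_eq by simp
        show "drop i u \<Turnstile> tR T j (u ! (i - 1)) (ws ! i)"
          unfolding T_def translation.simps mR using j(2) wsi midS rst_eq[of i u] i' by (simp add: n_def)
      qed
    next
      show "u \<Turnstile> tI T (ws ! 0)"
        unfolding T_def translation.simps mI using r rn by (simp add: ws_def a0_def)
      show "u \<Turnstile> tT T (ws ! (length u + 1))"
        unfolding T_def translation.simps mT using l ln wsn[of "Suc n"] by (simp add: an_def n_def)
    qed
  next
    fix z assume "z \<in> trans_rel T"
    then obtain u w ws where z: "z = (u, w)" and len: "length ws = length u + 2" and wc: "w = concat ws"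
      and mids: "\<forall>i\<in>{1..length u}. \<exists>j\<in>{1..tk T}.
        take (i - 1) u \<Turnstile> tL T j (u ! (i - 1)) (ws ! i) \<and> drop i u \<Turnstile> tR T j (u ! (i - 1)) (ws ! i)"
      and tI: "u \<Turnstile> tI T (ws ! 0)" and tT: "u \<Turnstile> tT T (ws ! (length u + 1))"
      unfolding trans_rel_def by blast
    define n where "n = length u"
    define mid where "mid = (\<lambda>i. the (bout B (the (lst B u (i - 1))) (u ! (i - 1)) (the (rst B u (n - i)))))"
    obtain l where l: "steps L (init L) u = Some l" "brho B l = Some (ws ! Suc n)"
      using tT unfolding T_def translation.simps mT n_def by auto
    obtain r where r: "steps R (init R) (rev u) = Some r" "blam B r = Some (ws ! 0)"
      using tI unfolding T_def translation.simps mI by auto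
    have midS: "mid i = out (lst B u (i - 1), rst B u (n - i)) (u ! (i - 1))" for i
    proof -
      obtain q where q: "lst B u (i - 1) = Some q" using lstS[OF l(1), of "i - 1"] by blast
      obtain q' where q': "rst B u (n - i) = Some q'" using rstS[OF r(1), of "n - i"] by blast
      show ?thesis unfolding mid_def out_def q q' by simp
    qed
    have mm: "map mid [1..<Suc n] = map (\<lambda>i. ws ! i) [1..<Suc n]"
    proof (rule map_cong[OF refl])
      fix i assume "i \<in> set [1..<Suc n]"
      then have i: "i \<in> {1..length u}" by (auto simp: n_def)
      then have "\<exists>j\<in>{1..tk T}. take (i - 1) u \<Turnstile> tL T j (u ! (i - 1)) (ws ! i) \<and> drop i u \<Turnstile> tR T j (u ! (i - 1)) (ws ! i)"
        using mids by blast
      then obtain j where j: "j \<in> {1..k}" "take (i - 1) u \<Turnstile> tLf j (u ! (i - 1)) (ws ! i)"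
        "drop i u \<Turnstile> tRf j (u ! (i - 1)) (ws ! i)"
        unfolding T_def translation.simps by blast
      have "idx j = (lst B u (i - 1), rst B u (n - i))"
        using j(2,3) i unfolding mL mR by (simp add: prod_eq_iff lst_eq rst_eq n_def)
      then show "mid i = ws ! i" using j(2) unfolding mL midS by simp
    qed
    have "bm_sem B u = Some (ws ! 0 @ concat (map mid [1..<Suc n]) @ ws ! Suc n)"
      using bmE[of u] l r lst_n[of u] rst_n[of u] unfolding mid_def n_def by (simp del: upt_Suc)
    also have "\<dots> = Some (ws ! 0 @ concat (map (\<lambda>i. ws ! i) [1..<Suc n]) @ ws ! Suc n)"
      unfolding mm ..
    also have "ws ! 0 @ concat (map (\<lambda>i. ws ! i) [1..<Suc n]) @ ws ! Suc n = w"
    proof -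
      have "length ws = Suc (Suc n)" using len by (simp add: n_def)
      then have dec: "ws = ws ! 0 # map (\<lambda>i. ws ! i) [1..<Suc n] @ [ws ! Suc n]" by (rule list_decomp)
      have "concat (ws ! 0 # map (\<lambda>i. ws ! i) [1..<Suc n] @ [ws ! Suc n]) = ws ! 0 @ concat (map (\<lambda>i. ws ! i) [1..<Suc n]) @ ws ! Suc n"
        by (simp del: upt_Suc)
      then show ?thesis using dec wc by metis
    qed
    finally show "z \<in> {(u, w). f u = Some w}" using z assms(6) by simp
  qed
  show ?thesis unfolding definable_by_translation_def using FT rel by blast
qed
end
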